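(* Assume the setting below with $Y_i(0)=0$ for all $i$, and let $p^{\mathrm H}_{k,c}=G_{\mathrm H}(n(c);N,N-k,N_1)$ for $0\le k\le N$ and $c\in\mathbb{R}$. (a) $p^{\mathrm H}_{k,c}$ is monotone non-decreasing in $c$ and monotone non-increasing in $k$. (b) Fix $1\le k\le N$ and $\alpha\in(0,1)$. The set $\{c\in\mathbb{R}: p^{\mathrm H}_{k,c}>\alpha\}$ equals $[\,y_{(k(\alpha))},\infty)$, where $$k(\alpha)\equiv N_1-Q_{\mathrm H}(1-\alpha;N,N-k,N_1).$$ Moreover, $\Pr\big(\tau_{(k)}\ge y_{(k(\alpha))}\big)\ge 1-\alpha$. (c) Fix $c\in\mathbb{R}$ and $\alpha\in(0,1)$. The set $\{N-k: p^{\mathrm H}_{k,c}>\alpha,\ 0\le k\le N\}$ equals $\{n_{c,\alpha},n_{c,\alpha}+1,\dots,N\}$, where $$n_{c,\alpha}=N-\max\{k: G_{\mathrm H}(n(c);N,N-k,N_1)>\alpha,\ 0\le k\le N\}.$$ Moreover, this set contains $N(c)$ with probability at least $1-\alpha$.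
   Context: Setting: - There are $N$ units with fixed potential outcomes $Y_i(1),Y_i(0)$ and ITE $\tau_i=Y_i(1)-Y_i(0)$. - The sorted ITEs are $\tau_{(1)}\le\dots\le\tau_{(N)}$. - CRE: the assignment vector $Z\in\{0,1\}^N$ is uniformly distributed over vectors with exactly $N_1$ ones, where $1\le N_1<N$. - The observed outcome is $Y_i=Z_iY_i(1)+(1-Z_i)Y_i(0)$. - $N(c)=\sum_i\mathbb{1}(\tau_i>c)$ and $n(c)=\sum_iZ_i\mathbb{1}(Y_i>c)$. - $G_{\mathrm H}(x;N,n,N_1)=\Pr(X\ge x)$ for $X$ Hypergeometric with parameters $(N,n,N_1)$ (population size $N$, $n$ marked items, sample size $N_1$). - $Q_{\mathrm H}(\theta;N,n,N_1)=\inf\{x:\Pr(X\le x)\ge\theta\}$ is the $\theta$-quantile of that distribution. - $y_{(1)}\le\dots\le y_{(N_1)}$ are the sorted observed outcomes of the treated units ($Z_i=1$), with the convention $y_{(0)}=-\infty$. *)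

theory Defs
  imports "HOL-Probability.Probability"
begin

text \<open>Units are indexed by 0..<N. An assignment Z is represented by the set S of treated units
  (Z_i = 1 iff i in S). The CRE is the uniform distribution over subsets of size N1.\<close>

definition assignments :: "nat \<Rightarrow> nat \<Rightarrow> nat set set" where
  "assignments N N1 = {S. S \<subseteq> {..<N} \<and> card S = N1}"

definition CRE :: "nat \<Rightarrow> nat \<Rightarrow> nat set pmf" where
  "CRE N N1 = pmf_of_set (assignments N N1)"

definition hyp_pmf :: "nat \<Rightarrow> nat \<Rightarrow> nat \<Rightarrow> nat \<Rightarrow> real" where
  "hyp_pmf NN n m x =
     (if x \<le> m then real (n choose x) * real ((NN - n) choose (m - x)) / real (NN choose m) else 0)"

definition G_H :: "nat \<Rightarrow> nat \<Rightarrow> nat \<Rightarrow> nat \<Rightarrow> real" where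
  "G_H x NN n m = (\<Sum>j\<in>{x..m}. hyp_pmf NN n m j)"

definition F_H :: "int \<Rightarrow> nat \<Rightarrow> nat \<Rightarrow> nat \<Rightarrow> real" where
  "F_H x NN n m = (\<Sum>j\<in>{j. j \<le> m \<and> int j \<le> x}. hyp_pmf NN n m j)"

definition Q_H :: "real \<Rightarrow> nat \<Rightarrow> nat \<Rightarrow> nat \<Rightarrow> int" where
  "Q_H \<theta> NN n m = Inf {x::int. F_H x NN n m \<ge> \<theta>}"

definition Yobs :: "(nat \<Rightarrow> real) \<Rightarrow> (nat \<Rightarrow> real) \<Rightarrow> nat set \<Rightarrow> nat \<Rightarrow> real" where
  "Yobs Y1 Y0 S i = (if i \<in> S then Y1 i else Y0 i)"

definition Ncount :: "nat \<Rightarrow> (nat \<Rightarrow> real) \<Rightarrow> (nat \<Rightarrow> real) \<Rightarrow> real \<Rightarrow> nat" where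
  "Ncount N Y1 Y0 c = card {i\<in>{..<N}. Y1 i - Y0 i > c}"

definition ncount :: "(nat \<Rightarrow> real) \<Rightarrow> (nat \<Rightarrow> real) \<Rightarrow> nat set \<Rightarrow> real \<Rightarrow> nat" where
  "ncount Y1 Y0 S c = card {i\<in>S. Yobs Y1 Y0 S i > c}"

definition tau_ord :: "nat \<Rightarrow> (nat \<Rightarrow> real) \<Rightarrow> (nat \<Rightarrow> real) \<Rightarrow> nat \<Rightarrow> real" where
  "tau_ord N Y1 Y0 k = sort (map (\<lambda>i. Y1 i - Y0 i) [0..<N]) ! (k - 1)"

definition y_ord :: "(nat \<Rightarrow> real) \<Rightarrow> (nat \<Rightarrow> real) \<Rightarrow> nat set \<Rightarrow> nat \<Rightarrow> ereal" where
  "y_ord Y1 Y0 S j = (if j = 0 then -\<infinity>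
      else ereal (sort (map (Yobs Y1 Y0 S) (sorted_list_of_set S)) ! (j - 1)))"

definition pH :: "nat \<Rightarrow> nat \<Rightarrow> (nat \<Rightarrow> real) \<Rightarrow> (nat \<Rightarrow> real) \<Rightarrow> nat set \<Rightarrow> nat \<Rightarrow> real \<Rightarrow> real" where
  "pH N N1 Y1 Y0 S k c = G_H (ncount Y1 Y0 S c) N (N - k) N1"

definition k_alpha :: "nat \<Rightarrow> nat \<Rightarrow> nat \<Rightarrow> real \<Rightarrow> int" where
  "k_alpha N N1 k \<alpha> = int N1 - Q_H (1 - \<alpha>) N (N - k) N1"

definition n_calpha :: "nat \<Rightarrow> nat \<Rightarrow> (nat \<Rightarrow> real) \<Rightarrow> (nat \<Rightarrow> real) \<Rightarrow> nat set \<Rightarrow> real \<Rightarrow> real \<Rightarrow> nat" where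
  "n_calpha N N1 Y1 Y0 S c \<alpha> =
     N - Max {k. k \<le> N \<and> G_H (ncount Y1 Y0 S c) N (N - k) N1 > \<alpha>}"

end

theory Submission imports Defs begin

lemma card_split:
  assumes A: "A \<subseteq> {..<N}" and cA: "card A = n" and jm: "j \<le> m"
  shows "card {S \<in> assignments N m. card (S \<inter> A) = j} = (n choose j) * ((N - n) choose (m - j))"
proof -
  let ?L = "{S \<in> assignments N m. card (S \<inter> A) = j}"
  let ?R = "{T. T \<subseteq> A \<and> card T = j} \<times> {U. U \<subseteq> {..<N} - A \<and> card U = m - j}"
  have fA: "finite A" using A finite_subset by blast
  have b: "bij_betw (\<lambda>S. (S \<inter> A, S - A)) ?L ?R"
  proof (rule bij_betw_byWitness[where f'="\<lambda>(T,U). T \<union> U"])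
    show "\<forall>a\<in>?L. (case (a \<inter> A, a - A) of (T, U) \<Rightarrow> T \<union> U) = a" by auto
    show "\<forall>a'\<in>?R. ((case a' of (T, U) \<Rightarrow> T \<union> U) \<inter> A, (case a' of (T, U) \<Rightarrow> T \<union> U) - A) = a'"
      by fastforce
    show "(\<lambda>S. (S \<inter> A, S - A)) ` ?L \<subseteq> ?R"
    proof
      fix x assume "x \<in> (\<lambda>S. (S \<inter> A, S - A)) ` ?L"
      then obtain S where S: "S \<subseteq> {..<N}" "card S = m" "card (S \<inter> A) = j" and x: "x = (S \<inter> A, S - A)"
        by (auto simp: assignments_def)
      have "finite S" using S(1) finite_subset by blast
      then have "card (S - A) = m - j" using S card_Diff_subset_Int by (metis finite_Int)
      then show "x \<in> ?R" using S x by auto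
    qed
    show "(\<lambda>(T, U). T \<union> U) ` ?R \<subseteq> ?L"
    proof
      fix x assume "x \<in> (\<lambda>(T, U). T \<union> U) ` ?R"
      then obtain T U where T: "T \<subseteq> A" "card T = j" and U: "U \<subseteq> {..<N} - A" "card U = m - j"
        and x: "x = T \<union> U" by auto
      have fT: "finite T" using T fA finite_subset by blast
      have fU: "finite U" using U finite_subset by blast
      have "card x = m" using card_Un_disjoint[OF fT fU] T U x jm by auto
      moreover have "x \<inter> A = T" using T U x by auto
      ultimately show "x \<in> ?L" using T U x A by (auto simp: assignments_def)
    qed
  qed
  have cD: "card ({..<N} - A) = N - n" using card_Diff_subset[OF fA A] cA by simp
  have "card ?L = card ?R" using bij_betw_same_card[OF b] .
  also have "\<dots> = (n choose j) * ((N - n) choose (m - j))"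
    using n_subsets[OF fA, of j] n_subsets[of "{..<N} - A" "m - j"] cA A cD
    by (simp add: card_cartesian_product card_Diff_subset)
  finally show ?thesis .
qed

lemma assign_finite: "finite (assignments N m)"
  by (rule finite_subset[of _ "Pow {..<N}"]) (auto simp: assignments_def)

lemma assign_card: "card (assignments N m) = N choose m"
  using n_subsets[of "{..<N}" m] by (simp add: assignments_def)

lemma assign_ne: "m \<le> N \<Longrightarrow> assignments N m \<noteq> {}"
  using assign_card[of N m] by (metis card.empty zero_less_binomial less_irrefl)

lemma set_pmf_CRE: "m \<le> N \<Longrightarrow> set_pmf (CRE N m) = assignments N m"
  unfolding CRE_def using assign_finite assign_ne by (simp add: set_pmf_of_set)

lemma card_Int_le: "S \<in> assignments N m \<Longrightarrow> card (S \<inter> A) \<le> m"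
  unfolding assignments_def
  by (metis (mono_tags, lifting) Int_lower1 card_mono finite_lessThan finite_subset mem_Collect_eq)

lemma G_prob:
  assumes A: "A \<subseteq> {..<N}" and cA: "card A = n" and mN: "m \<le> N"
  shows "G_H x N n m = measure_pmf.prob (CRE N m) {S. x \<le> card (S \<inter> A)}"
proof -
  let ?B = "assignments N m"
  have eq: "?B \<inter> {S. x \<le> card (S \<inter> A)} = (\<Union>j\<in>{x..m}. {S \<in> ?B. card (S \<inter> A) = j})"
    using card_Int_le[of _ N m A] by auto
  have "card (?B \<inter> {S. x \<le> card (S \<inter> A)}) = (\<Sum>j\<in>{x..m}. card {S \<in> ?B. card (S \<inter> A) = j})"
    unfolding eq
    by (rule card_UN_disjoint) (auto intro: finite_subset[OF _ assign_finite])
  also have "\<dots> = (\<Sum>j\<in>{x..m}. (n choose j) * ((N - n) choose (m - j)))"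
    by (rule sum.cong) (auto intro!: card_split[OF A cA])
  finally have c: "card (?B \<inter> {S. x \<le> card (S \<inter> A)}) = (\<Sum>j\<in>{x..m}. (n choose j) * ((N - n) choose (m - j)))" .
  have "measure_pmf.prob (CRE N m) {S. x \<le> card (S \<inter> A)} = real (card (?B \<inter> {S. x \<le> card (S \<inter> A)})) / real (N choose m)"
    unfolding CRE_def using assign_finite assign_ne[OF mN]
    by (simp add: measure_pmf_of_set assign_card)
  also have "\<dots> = (\<Sum>j\<in>{x..m}. real (n choose j) * real ((N - n) choose (m - j)) / real (N choose m))"
    unfolding c of_nat_sum sum_divide_distrib by simp
  also have "\<dots> = G_H x N n m"
    unfolding G_H_def hyp_pmf_def by (rule sum.cong) auto
  finally show ?thesis by simp
qed

lemma G_H_mono_n: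
  assumes "n \<le> n'" "n' \<le> N" "m \<le> N"
  shows "G_H x N n m \<le> G_H x N n' m"
proof -
  have "G_H x N n m = measure_pmf.prob (CRE N m) {S. x \<le> card (S \<inter> {..<n})}"
    using assms by (intro G_prob) auto
  also have "\<dots> \<le> measure_pmf.prob (CRE N m) {S. x \<le> card (S \<inter> {..<n'})}"
  proof (rule measure_pmf.finite_measure_mono)
    show "{S. x \<le> card (S \<inter> {..<n})} \<subseteq> {S. x \<le> card (S \<inter> {..<n'})}"
    proof
      fix S assume "S \<in> {S. x \<le> card (S \<inter> {..<n})}"
      moreover have "card (S \<inter> {..<n}) \<le> card (S \<inter> {..<n'})"
        by (rule card_mono) (use assms in auto)
      ultimately show "S \<in> {S. x \<le> card (S \<inter> {..<n'})}" by auto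
    qed
  qed auto
  also have "\<dots> = G_H x N n' m"
    using assms by (intro G_prob[symmetric]) auto
  finally show ?thesis .
qed

lemma G_H_mono_x: "x \<le> x' \<Longrightarrow> G_H x' N n m \<le> G_H x N n m"
  unfolding G_H_def
  by (rule sum_mono2) (auto simp: hyp_pmf_def)

lemma G_H_0:
  assumes "n \<le> N" "m \<le> N"
  shows "G_H 0 N n m = 1"
  using G_prob[of "{..<n}" N n m 0] assms by simp

lemma G_F:
  assumes "n \<le> N" "m \<le> N"
  shows "G_H x N n m + F_H (int x - 1) N n m = 1"
proof -
  have "G_H x N n m + F_H (int x - 1) N n m = (\<Sum>j\<in>{x..m} \<union> {j. j \<le> m \<and> int j \<le> int x - 1}. hyp_pmf N n m j)"
    unfolding G_H_def F_H_def by (rule sum.union_disjoint[symmetric]) auto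
  also have "{x..m} \<union> {j. j \<le> m \<and> int j \<le> int x - 1} = {0..m}" by auto
  also have "(\<Sum>j\<in>{0..m}. hyp_pmf N n m j) = 1" using G_H_0[OF assms] unfolding G_H_def .
  finally show ?thesis .
qed

lemma pvalid:
  fixes M :: "'a pmf" and f :: "'a \<Rightarrow> nat"
  assumes "0 \<le> \<alpha>"
  defines "G \<equiv> \<lambda>x. measure_pmf.prob M {w. x \<le> f w}"
  shows "measure_pmf.prob M {w. G (f w) \<le> \<alpha>} \<le> \<alpha>"
proof (cases "\<exists>x. G x \<le> \<alpha>")
  case False
  then have "{w. G (f w) \<le> \<alpha>} = {}" by auto
  then show ?thesis using assms by simp
next
  case True
  define x0 where "x0 = (LEAST x. G x \<le> \<alpha>)"
  have x0: "G x0 \<le> \<alpha>" unfolding x0_def using True by (metis LeastI)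
  have "{w. G (f w) \<le> \<alpha>} = {w. x0 \<le> f w}"
  proof (intro set_eqI iffI)
    fix w assume "w \<in> {w. G (f w) \<le> \<alpha>}"
    then show "w \<in> {w. x0 \<le> f w}" unfolding x0_def by (auto intro: Least_le)
  next
    fix w assume "w \<in> {w. x0 \<le> f w}"
    then have "G (f w) \<le> G x0" unfolding G_def
      by (intro measure_pmf.finite_measure_mono) auto
    then show "w \<in> {w. G (f w) \<le> \<alpha>}" using x0 by auto
  qed
  then show ?thesis using x0 unfolding G_def by simp
qed

lemma pvalid_H:
  assumes A: "A \<subseteq> {..<N}" and cA: "card A = n" and mN: "m \<le> N" and a: "0 \<le> \<alpha>"
  shows "measure_pmf.prob (CRE N m) {S. \<alpha> < G_H (card (S \<inter> A)) N n m} \<ge> 1 - \<alpha>"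
proof -
  have GG: "G_H x N n m = measure_pmf.prob (CRE N m) {S. x \<le> card (S \<inter> A)}" for x
    using G_prob[OF A cA mN] .
  have le: "measure_pmf.prob (CRE N m) {S. G_H (card (S \<inter> A)) N n m \<le> \<alpha>} \<le> \<alpha>"
    unfolding GG using pvalid[OF a, of "CRE N m" "\<lambda>S. card (S \<inter> A)"] by simp
  have "{S. \<alpha> < G_H (card (S \<inter> A)) N n m} = space (measure_pmf (CRE N m)) - {S. G_H (card (S \<inter> A)) N n m \<le> \<alpha>}"
    by auto
  then have "measure_pmf.prob (CRE N m) {S. \<alpha> < G_H (card (S \<inter> A)) N n m} = 1 - measure_pmf.prob (CRE N m) {S. G_H (card (S \<inter> A)) N n m \<le> \<alpha>}"
    using measure_pmf.prob_compl[of "{S. G_H (card (S \<inter> A)) N n m \<le> \<alpha>}" "CRE N m"] by simp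
  then show ?thesis using le by simp
qed

lemma F_H_mono: "y \<le> y' \<Longrightarrow> F_H y NN n m \<le> F_H y' NN n m"
  unfolding F_H_def
  by (rule sum_mono2) (auto simp: hyp_pmf_def)

lemma F_H_neg: "y < 0 \<Longrightarrow> F_H y NN n m = 0"
  unfolding F_H_def by (rule sum.neutral) auto

lemma F_H_top:
  assumes "n \<le> N" "m \<le> N"
  shows "F_H (int m) N n m = 1"
  using G_F[OF assms, of "Suc m"] by (simp add: G_H_def)

lemma Q_props:
  assumes "n \<le> N" "m \<le> N" "0 < \<alpha>" "\<alpha> < 1"
  shows "0 \<le> Q_H (1 - \<alpha>) N n m" "Q_H (1 - \<alpha>) N n m \<le> int m"
    and "\<And>x. x \<le> m \<Longrightarrow> (\<alpha> < G_H x N n m \<longleftrightarrow> int x \<le> Q_H (1 - \<alpha>) N n m)"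
proof -
  define T where "T = {y::int. 1 - \<alpha> \<le> F_H y N n m}"
  have Q: "Q_H (1 - \<alpha>) N n m = Inf T" unfolding Q_H_def T_def ..
  have mT: "int m \<in> T" unfolding T_def using F_H_top[OF assms(1,2)] assms by simp
  have Tpos: "y \<in> T \<Longrightarrow> 0 \<le> y" for y
    unfolding T_def using F_H_neg[of y N n m] assms by force
  have bdd: "bdd_below T" using Tpos by (auto simp: bdd_below_def)
  have ne: "T \<noteq> {}" using mT by auto
  have up: "y \<in> T \<Longrightarrow> y \<le> y' \<Longrightarrow> y' \<in> T" for y y'
    unfolding T_def using F_H_mono[of y y' N n m] by auto
  show "0 \<le> Q_H (1 - \<alpha>) N n m" unfolding Q using Tpos ne by (simp add: le_cInf_iff[OF ne bdd])
  show "Q_H (1 - \<alpha>) N n m \<le> int m" unfolding Q by (rule cInf_lower[OF mT bdd])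
  fix x assume xm: "x \<le> m"
  have "\<alpha> < G_H x N n m \<longleftrightarrow> int x - 1 \<notin> T"
    using G_F[OF assms(1,2), of x] unfolding T_def by auto
  also have "\<dots> \<longleftrightarrow> (\<forall>y\<in>T. int x \<le> y)"
    using up by (metis linorder_not_le zle_diff1_eq order_refl)
  also have "\<dots> \<longleftrightarrow> int x \<le> Inf T" by (simp add: le_cInf_iff[OF ne bdd])
  finally show "\<alpha> < G_H x N n m \<longleftrightarrow> int x \<le> Q_H (1 - \<alpha>) N n m" unfolding Q .
qed

lemma len_filter_sort: "length (filter P (sort xs)) = length (filter P xs)"
  by (metis mset_filter mset_sort size_mset)

lemma sorted_thresh:
  fixes ys :: "real list"
  assumes s: "sorted ys" and j: "1 \<le> j" "j \<le> length ys"
  shows "ys ! (j - 1) \<le> c \<longleftrightarrow> j \<le> length (filter (\<lambda>y. y \<le> c) ys)"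
proof
  assume h: "ys ! (j - 1) \<le> c"
  have "{..<j} \<subseteq> {i. i < length ys \<and> ys ! i \<le> c}"
  proof
    fix i assume "i \<in> {..<j}"
    then have "i \<le> j - 1" "i < length ys" using j by auto
    then have "ys ! i \<le> ys ! (j - 1)" using s j by (intro sorted_nth_mono) auto
    then show "i \<in> {i. i < length ys \<and> ys ! i \<le> c}" using h \<open>i < length ys\<close> by auto
  qed
  then have "card {..<j} \<le> card {i. i < length ys \<and> ys ! i \<le> c}" by (intro card_mono) auto
  then show "j \<le> length (filter (\<lambda>y. y \<le> c) ys)" by (simp add: length_filter_conv_card)
next
  assume h: "j \<le> length (filter (\<lambda>y. y \<le> c) ys)"
  show "ys ! (j - 1) \<le> c"
  proof (rule ccontr)
    assume n: "\<not> ys ! (j - 1) \<le> c"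
    have "{i. i < length ys \<and> ys ! i \<le> c} \<subseteq> {..<j - 1}"
    proof
      fix i assume i: "i \<in> {i. i < length ys \<and> ys ! i \<le> c}"
      show "i \<in> {..<j - 1}"
      proof (rule ccontr)
        assume "i \<notin> {..<j - 1}"
        then have "ys ! (j - 1) \<le> ys ! i" using s i by (intro sorted_nth_mono) auto
        then show False using n i by auto
      qed
    qed
    then have "card {i. i < length ys \<and> ys ! i \<le> c} \<le> card {..<j - 1}" by (intro card_mono) auto
    then show False using h j by (simp add: length_filter_conv_card)
  qed
qed

lemma count_filter_set:
  assumes "finite S"
  shows "length (filter P (map g (sorted_list_of_set S))) = card {i\<in>S. P (g i)}"
proof -
  have "length (filter P (map g (sorted_list_of_set S))) = length (filter (P \<circ> g) (sorted_list_of_set S))"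
    by (simp add: filter_map)
  also have "\<dots> = card (set (filter (P \<circ> g) (sorted_list_of_set S)))"
    by (rule distinct_card[symmetric]) simp
  also have "set (filter (P \<circ> g) (sorted_list_of_set S)) = {i\<in>S. P (g i)}" using assms by auto
  finally show ?thesis .
qed

lemma y_ord_iff:
  assumes S: "S \<in> assignments N N1" and j: "j \<le> N1"
  shows "y_ord Y1 Y0 S j \<le> ereal c \<longleftrightarrow> j \<le> card {i\<in>S. Y1 i \<le> c}"
proof (cases "j = 0")
  case True then show ?thesis by (simp add: y_ord_def)
next
  case False
  have fS: "finite S" and cS: "card S = N1" using S unfolding assignments_def
    by (auto intro: finite_subset)
  define ys where "ys = sort (map (Yobs Y1 Y0 S) (sorted_list_of_set S))"
  have len: "length ys = N1" unfolding ys_def using cS fS by simp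
  have cnt: "length (filter (\<lambda>y. y \<le> c) ys) = card {i\<in>S. Y1 i \<le> c}"
    unfolding ys_def len_filter_sort count_filter_set[OF fS] by (simp add: Yobs_def conj_commute cong: conj_cong)
  have "y_ord Y1 Y0 S j \<le> ereal c \<longleftrightarrow> ys ! (j - 1) \<le> c"
    using False by (simp add: y_ord_def ys_def)
  also have "\<dots> \<longleftrightarrow> j \<le> card {i\<in>S. Y1 i \<le> c}"
    unfolding cnt[symmetric] using False j len by (intro sorted_thresh) (auto simp: ys_def)
  finally show ?thesis .
qed

lemma tau_count:
  assumes k: "1 \<le> k" "k \<le> N"
  shows "card {i\<in>{..<N}. tau_ord N Y1 Y0 k < Y1 i - Y0 i} \<le> N - k"
proof -
  define v where "v = tau_ord N Y1 Y0 k"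
  define xs where "xs = map (\<lambda>i. Y1 i - Y0 i) [0..<N]"
  define ys where "ys = sort xs"
  have v: "v = ys ! (k - 1)" unfolding v_def tau_ord_def ys_def xs_def ..
  have lys: "length ys = N" unfolding ys_def xs_def by simp
  have "card {i\<in>{..<N}. v < Y1 i - Y0 i} = length (filter (\<lambda>x. v < x) xs)"
    unfolding xs_def length_filter_conv_card by (rule arg_cong[where f=card]) auto
  also have "\<dots> = length (filter (\<lambda>x. v < x) ys)" unfolding ys_def len_filter_sort ..
  also have "\<dots> = card {i. i < N \<and> v < ys ! i}" unfolding length_filter_conv_card lys ..
  also have "\<dots> \<le> card {k..<N}"
  proof (rule card_mono)
    show "{i. i < N \<and> v < ys ! i} \<subseteq> {k..<N}"
    proof
      fix i assume i: "i \<in> {i. i < N \<and> v < ys ! i}"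
      show "i \<in> {k..<N}"
      proof (rule ccontr)
        assume "i \<notin> {k..<N}"
        then have "i \<le> k - 1" using i by auto
        then have "ys ! i \<le> ys ! (k - 1)"
          using k lys by (intro sorted_nth_mono) (auto simp: ys_def)
        then show False using i v by auto
      qed
    qed
  qed auto
  finally show ?thesis unfolding v_def by simp
qed

lemma ncount_eq:
  assumes S: "S \<in> assignments N N1" and Y0: "\<forall>i. Y0 i = 0"
  shows "ncount Y1 Y0 S c = card (S \<inter> {i\<in>{..<N}. c < Y1 i - Y0 i})"
  using S Y0 unfolding ncount_def assignments_def Yobs_def
  by (intro arg_cong[where f=card]) auto

lemma ncount_compl:
  assumes S: "S \<in> assignments N N1"
  shows "ncount Y1 Y0 S c + card {i\<in>S. Y1 i \<le> c} = N1"
proof -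
  have fS: "finite S" and cS: "card S = N1" using S unfolding assignments_def
    by (auto intro: finite_subset)
  have "ncount Y1 Y0 S c = card {i\<in>S. c < Y1 i}" unfolding ncount_def Yobs_def
    by (intro arg_cong[where f=card]) auto
  moreover have "card {i\<in>S. c < Y1 i} + card {i\<in>S. Y1 i \<le> c} = card S"
  proof -
    have "{i\<in>S. c < Y1 i} \<union> {i\<in>S. Y1 i \<le> c} = S" by auto
    moreover have "card ({i\<in>S. c < Y1 i} \<union> {i\<in>S. Y1 i \<le> c}) = card {i\<in>S. c < Y1 i} + card {i\<in>S. Y1 i \<le> c}"
      by (rule card_Un_disjoint) (use fS in auto)
    ultimately show ?thesis by simp
  qed
  ultimately show ?thesis using cS by simp
qed

lemma ncount_le: "S \<in> assignments N N1 \<Longrightarrow> ncount Y1 Y0 S c \<le> N1"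
  using ncount_compl[of S N N1 Y1 Y0 c] by simp

lemma part_b_set:
  assumes S: "S \<in> assignments N N1" and N1N: "N1 \<le> N" and k: "k \<le> N" and a: "0 < \<alpha>" "\<alpha> < 1"
  shows "pH N N1 Y1 Y0 S k c > \<alpha> \<longleftrightarrow> y_ord Y1 Y0 S (nat (k_alpha N N1 k \<alpha>)) \<le> ereal c"
proof -
  define Q where "Q = Q_H (1 - \<alpha>) N (N - k) N1"
  define n where "n = ncount Y1 Y0 S c"
  have nle: "n \<le> N1" unfolding n_def using ncount_le[OF S] .
  have Q0: "0 \<le> Q" "Q \<le> int N1" unfolding Q_def using Q_props[of "N - k" N N1 \<alpha>] assms by auto
  have "pH N N1 Y1 Y0 S k c > \<alpha> \<longleftrightarrow> int n \<le> Q"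
    unfolding pH_def Q_def n_def using Q_props(3)[of "N - k" N N1 \<alpha>] assms nle n_def by auto
  also have "\<dots> \<longleftrightarrow> nat (int N1 - Q) \<le> card {i\<in>S. Y1 i \<le> c}"
    using ncount_compl[OF S, of Y1 Y0 c] Q0 nle unfolding n_def by auto
  also have "\<dots> \<longleftrightarrow> y_ord Y1 Y0 S (nat (k_alpha N N1 k \<alpha>)) \<le> ereal c"
    unfolding k_alpha_def Q_def[symmetric] using Q0 by (intro y_ord_iff[OF S, symmetric]) auto
  finally show ?thesis .
qed

lemma G_H_full:
  assumes "x \<le> m" "m \<le> N"
  shows "G_H x N N m = 1"
proof -
  have "F_H (int x - 1) N N m = 0"
    unfolding F_H_def using assms by (intro sum.neutral) (auto simp: hyp_pmf_def)
  then show ?thesis using G_F[of N N m x] assms by simp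
qed

lemma part_c_set:
  fixes c :: real and Y1 Y0 :: "nat \<Rightarrow> real"
  assumes S: "S \<in> assignments N N1" and N1N: "N1 \<le> N" and a: "0 < \<alpha>" "\<alpha> < 1"
  defines "K \<equiv> {k. k \<le> N \<and> G_H (ncount Y1 Y0 S c) N (N - k) N1 > \<alpha>}"
  shows "{N - k | k. k \<le> N \<and> pH N N1 Y1 Y0 S k c > \<alpha>} = {n_calpha N N1 Y1 Y0 S c \<alpha>..N}"
    and "\<And>k. k \<in> K \<Longrightarrow> N - k \<ge> n_calpha N N1 Y1 Y0 S c \<alpha>"
proof -
  have fK: "finite K" unfolding K_def by auto
  have K0: "0 \<in> K" unfolding K_def using G_H_full[OF ncount_le[OF S] N1N, of Y1 Y0 c] a by simp
  have down: "k' \<in> K" if "k \<in> K" "k' \<le> k" for k k'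
  proof -
    have "G_H (ncount Y1 Y0 S c) N (N - k) N1 \<le> G_H (ncount Y1 Y0 S c) N (N - k') N1"
      using that N1N by (intro G_H_mono_n) auto
    then show ?thesis using that unfolding K_def by auto
  qed
  have nc: "n_calpha N N1 Y1 Y0 S c \<alpha> = N - Max K" unfolding n_calpha_def K_def ..
  have "Max K \<in> K" using Max_in[OF fK] K0 by auto
  then have MK: "Max K \<le> N" unfolding K_def by simp
  show "\<And>k. k \<in> K \<Longrightarrow> N - k \<ge> n_calpha N N1 Y1 Y0 S c \<alpha>"
    unfolding nc using Max_ge[OF fK] by (simp add: diff_le_mono2)
  have "{N - k | k. k \<le> N \<and> pH N N1 Y1 Y0 S k c > \<alpha>} = (\<lambda>k. N - k) ` K"
    unfolding K_def pH_def by auto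
  also have "\<dots> = {N - Max K..N}"
  proof (intro set_eqI iffI)
    fix x assume "x \<in> (\<lambda>k. N - k) ` K"
    then obtain k where "k \<in> K" "x = N - k" by auto
    then show "x \<in> {N - Max K..N}" using Max_ge[OF fK] by (auto simp: diff_le_mono2)
  next
    fix x assume x: "x \<in> {N - Max K..N}"
    have "N - x \<le> Max K" using x MK by auto
    then have "N - x \<in> K" using down[OF Max_in[OF fK]] K0 by blast
    moreover have "x = N - (N - x)" using x by auto
    ultimately show "x \<in> (\<lambda>k. N - k) ` K" by blast
  qed
  finally show "{N - k | k. k \<le> N \<and> pH N N1 Y1 Y0 S k c > \<alpha>} = {n_calpha N N1 Y1 Y0 S c \<alpha>..N}"
    unfolding nc .
qed

theorem proposition2:
  fixes N N1 :: nat and Y1 Y0 :: "nat \<Rightarrow> real"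
  assumes N1_pos: "1 \<le> N1" and N1_less: "N1 < N"
    and Y0_zero: "\<forall>i. Y0 i = 0"
  shows
    \<comment> \<open>(a)\<close>
    "(\<forall>S\<in>assignments N N1. \<forall>k c c'. k \<le> N \<and> c \<le> c' \<longrightarrow>
         pH N N1 Y1 Y0 S k c \<le> pH N N1 Y1 Y0 S k c')
     \<and> (\<forall>S\<in>assignments N N1. \<forall>k k' c. k \<le> k' \<and> k' \<le> N \<longrightarrow>
         pH N N1 Y1 Y0 S k' c \<le> pH N N1 Y1 Y0 S k c)
     \<comment> \<open>(b)\<close>
     \<and> (\<forall>k \<alpha>. 1 \<le> k \<and> k \<le> N \<and> 0 < \<alpha> \<and> \<alpha> < 1 \<longrightarrow>
         (\<forall>S\<in>assignments N N1.
            {c::real. pH N N1 Y1 Y0 S k c > \<alpha>}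
              = {c. y_ord Y1 Y0 S (nat (k_alpha N N1 k \<alpha>)) \<le> ereal c})
         \<and> measure_pmf.prob (CRE N N1)
             {S. y_ord Y1 Y0 S (nat (k_alpha N N1 k \<alpha>)) \<le> ereal (tau_ord N Y1 Y0 k)} \<ge> 1 - \<alpha>)
     \<comment> \<open>(c)\<close>
     \<and> (\<forall>c \<alpha>. 0 < \<alpha> \<and> \<alpha> < 1 \<longrightarrow>
         (\<forall>S\<in>assignments N N1.
            {N - k | k. k \<le> N \<and> pH N N1 Y1 Y0 S k c > \<alpha>} = {n_calpha N N1 Y1 Y0 S c \<alpha>..N})
         \<and> measure_pmf.prob (CRE N N1)
             {S. Ncount N Y1 Y0 c \<in> {n_calpha N N1 Y1 Y0 S c \<alpha>..N}} \<ge> 1 - \<alpha>)"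
proof (intro conjI allI impI ballI)
  have N1N: "N1 \<le> N" using N1_less by simp
  note sp = set_pmf_CRE[OF N1N]
  show "pH N N1 Y1 Y0 S k c \<le> pH N N1 Y1 Y0 S k c'"
    if S: "S \<in> assignments N N1" and h: "k \<le> N \<and> c \<le> c'" for S k c c'
  proof -
    have "ncount Y1 Y0 S c' \<le> ncount Y1 Y0 S c"
      unfolding ncount_def using S h by (intro card_mono) (auto simp: assignments_def intro: finite_subset)
    then show ?thesis unfolding pH_def by (rule G_H_mono_x)
  qed
  show "pH N N1 Y1 Y0 S k' c \<le> pH N N1 Y1 Y0 S k c"
    if S: "S \<in> assignments N N1" and h: "k \<le> k' \<and> k' \<le> N" for S k k' c
    unfolding pH_def using h N1N by (intro G_H_mono_n) auto
  fix k :: nat and \<alpha> :: real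
  assume h: "1 \<le> k \<and> k \<le> N \<and> 0 < \<alpha> \<and> \<alpha> < 1"
  show "{c::real. pH N N1 Y1 Y0 S k c > \<alpha>} = {c. y_ord Y1 Y0 S (nat (k_alpha N N1 k \<alpha>)) \<le> ereal c}"
    if S: "S \<in> assignments N N1" for S
    using part_b_set[OF S N1N, of k \<alpha>] h by auto
  define v where "v = tau_ord N Y1 Y0 k"
  define A where "A = {i\<in>{..<N}. v < Y1 i - Y0 i}"
  have A: "A \<subseteq> {..<N}" unfolding A_def by auto
  have cA: "card A \<le> N - k" unfolding A_def v_def using tau_count[of k N Y1 Y0] h by auto
  have "1 - \<alpha> \<le> measure_pmf.prob (CRE N N1) {S. \<alpha> < G_H (card (S \<inter> A)) N (card A) N1}"
    using pvalid_H[OF A refl N1N, of \<alpha>] h by simp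
  also have "\<dots> = measure_pmf.prob (CRE N N1) ({S. \<alpha> < G_H (card (S \<inter> A)) N (card A) N1} \<inter> set_pmf (CRE N N1))"
    by (simp add: measure_Int_set_pmf)
  also have "\<dots> \<le> measure_pmf.prob (CRE N N1) {S. y_ord Y1 Y0 S (nat (k_alpha N N1 k \<alpha>)) \<le> ereal v}"
  proof (rule measure_pmf.finite_measure_mono)
    show "{S. \<alpha> < G_H (card (S \<inter> A)) N (card A) N1} \<inter> set_pmf (CRE N N1)
      \<subseteq> {S. y_ord Y1 Y0 S (nat (k_alpha N N1 k \<alpha>)) \<le> ereal v}"
    proof
      fix S assume "S \<in> {S. \<alpha> < G_H (card (S \<inter> A)) N (card A) N1} \<inter> set_pmf (CRE N N1)"
      then have S: "S \<in> assignments N N1" and g: "\<alpha> < G_H (card (S \<inter> A)) N (card A) N1"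
        using sp by auto
      have "G_H (card (S \<inter> A)) N (card A) N1 \<le> G_H (card (S \<inter> A)) N (N - k) N1"
        using cA N1N by (intro G_H_mono_n) auto
      moreover have "card (S \<inter> A) = ncount Y1 Y0 S v"
        unfolding A_def using ncount_eq[OF S Y0_zero] by simp
      ultimately have "pH N N1 Y1 Y0 S k v > \<alpha>" using g unfolding pH_def by simp
      then show "S \<in> {S. y_ord Y1 Y0 S (nat (k_alpha N N1 k \<alpha>)) \<le> ereal v}"
        using part_b_set[OF S N1N, of k \<alpha> Y1 Y0 v] h by auto
    qed
  qed auto
  finally show "measure_pmf.prob (CRE N N1)
             {S. y_ord Y1 Y0 S (nat (k_alpha N N1 k \<alpha>)) \<le> ereal (tau_ord N Y1 Y0 k)} \<ge> 1 - \<alpha>"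
    unfolding v_def .
next
  have N1N: "N1 \<le> N" using N1_less by simp
  note sp = set_pmf_CRE[OF N1N]
  fix c \<alpha> :: real
  assume h: "0 < \<alpha> \<and> \<alpha> < 1"
  show "{N - k | k. k \<le> N \<and> pH N N1 Y1 Y0 S k c > \<alpha>} = {n_calpha N N1 Y1 Y0 S c \<alpha>..N}"
    if S: "S \<in> assignments N N1" for S
    using part_c_set(1)[OF S N1N] h by auto
  define A where "A = {i\<in>{..<N}. c < Y1 i - Y0 i}"
  have A: "A \<subseteq> {..<N}" unfolding A_def by auto
  have cA: "card A = Ncount N Y1 Y0 c" unfolding A_def Ncount_def ..
  have cAN: "card A \<le> N" using card_mono[OF _ A] by simp
  have "1 - \<alpha> \<le> measure_pmf.prob (CRE N N1) {S. \<alpha> < G_H (card (S \<inter> A)) N (card A) N1}"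
    using pvalid_H[OF A refl N1N, of \<alpha>] h by simp
  also have "\<dots> = measure_pmf.prob (CRE N N1) ({S. \<alpha> < G_H (card (S \<inter> A)) N (card A) N1} \<inter> set_pmf (CRE N N1))"
    by (simp add: measure_Int_set_pmf)
  also have "\<dots> \<le> measure_pmf.prob (CRE N N1) {S. Ncount N Y1 Y0 c \<in> {n_calpha N N1 Y1 Y0 S c \<alpha>..N}}"
  proof (rule measure_pmf.finite_measure_mono)
    show "{S. \<alpha> < G_H (card (S \<inter> A)) N (card A) N1} \<inter> set_pmf (CRE N N1)
      \<subseteq> {S. Ncount N Y1 Y0 c \<in> {n_calpha N N1 Y1 Y0 S c \<alpha>..N}}"
    proof
      fix S assume "S \<in> {S. \<alpha> < G_H (card (S \<inter> A)) N (card A) N1} \<inter> set_pmf (CRE N N1)"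
      then have S: "S \<in> assignments N N1" and g: "\<alpha> < G_H (card (S \<inter> A)) N (card A) N1"
        using sp by auto
      have "card (S \<inter> A) = ncount Y1 Y0 S c"
        unfolding A_def using ncount_eq[OF S Y0_zero] by simp
      moreover have "N - (N - card A) = card A" using cAN by simp
      ultimately have "N - card A \<in> {k. k \<le> N \<and> G_H (ncount Y1 Y0 S c) N (N - k) N1 > \<alpha>}"
        using g by simp
      then have "N - (N - card A) \<ge> n_calpha N N1 Y1 Y0 S c \<alpha>"
        using part_c_set(2)[OF S N1N] h by blast
      then show "S \<in> {S. Ncount N Y1 Y0 c \<in> {n_calpha N N1 Y1 Y0 S c \<alpha>..N}}"
        using cA cAN by simp
    qed
  qed auto
  finally show "measure_pmf.prob (CRE N N1)
             {S. Ncount N Y1 Y0 c \<in> {n_calpha N N1 Y1 Y0 S c \<alpha>..N}} \<ge> 1 - \<alpha>" .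
qed

end
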